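(* For any representations $R_1,R_2,R_3$: (1) $d_{\mathrm{repr}}(R_1,R_1)=0$; (2) $d_{\mathrm{repr}}(R_1,R_2)=d_{\mathrm{repr}}(R_2,R_1)$; (3) $d_{\mathrm{repr}}(R_1,R_3)\le d_{\mathrm{repr}}(R_1,R_2)+d_{\mathrm{repr}}(R_2,R_3)$.
   Context: A representation is a chain-structured causal model $U\to v_1\to\cdots\to v_L$ whose hidden variables are real-vector-valued functions of the input (on a task $S$). For representations $R_i$, let $H_i$ be the concatenation (direct sum) of the solutions of all hidden variables of $R_i$, regarded as a function on $S$. Then $d_{\mathrm{repr}}(R_1,R_2)=\max\big(\inf_{\|A\|_{\mathrm{op}}\le1}\|AH_1-H_2\|,\ \inf_{\|B\|_{\mathrm{op}}\le1}\|H_1-BH_2\|\big)$, where the infima are over linear operators of operator norm at most $1$ and $\|\cdot\|$ is a direct-sum norm. *)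

theory Defs
  imports Complex_Main "Jordan_Normal_Form.Matrix"
begin

text \<open>A representation: a chain-structured causal model U -> v_1 -> ... -> v_L.  Hidden variable v_l is real-vector valued
  of dimension (rep_dims R ! (l-1)).  The mechanism of v_1 is a function of the input,
  the mechanism of v_(l+1) is a function of v_l.\<close>

datatype 'x representation =
  Repr (rep_dims: "nat list") (rep_first: "'x \<Rightarrow> real vec")
       (rep_mechs: "(real vec \<Rightarrow> real vec) list")

fun chain_sols :: "('x \<Rightarrow> real vec) \<Rightarrow> (real vec \<Rightarrow> real vec) list \<Rightarrow> ('x \<Rightarrow> real vec) list" where
  "chain_sols f [] = [f]"
| "chain_sols f (g # gs) = f # chain_sols (g \<circ> f) gs"

definition hidden_sols :: "'x representation \<Rightarrow> ('x \<Rightarrow> real vec) list" where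
  "hidden_sols R = chain_sols (rep_first R) (rep_mechs R)"

definition wf_repr :: "'x set \<Rightarrow> 'x representation \<Rightarrow> bool" where
  "wf_repr S R \<longleftrightarrow> length (rep_dims R) = length (hidden_sols R) \<and>
     (\<forall>l < length (hidden_sols R). \<forall>s \<in> S. (hidden_sols R ! l) s \<in> carrier_vec (rep_dims R ! l))"

definition repr_dim :: "'x representation \<Rightarrow> nat" where
  "repr_dim R = sum_list (rep_dims R)"

definition concat_H :: "'x representation \<Rightarrow> 'x \<Rightarrow> real vec" where
  "concat_H R s = foldr (\<lambda>h acc. h s @\<^sub>v acc) (hidden_sols R) (vec 0 (\<lambda>_. 0))"

definition vnorm :: "real vec \<Rightarrow> real" where
  "vnorm v = sqrt (\<Sum>i<dim_vec v. (v $ i)\<^sup>2)"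

definition op_norm :: "real mat \<Rightarrow> real" where
  "op_norm A = (SUP v \<in> {v \<in> carrier_vec (dim_col A). vnorm v \<le> 1}. vnorm (A *\<^sub>v v))"

definition fnorm :: "'x set \<Rightarrow> ('x \<Rightarrow> real vec) \<Rightarrow> real" where
  "fnorm S F = sqrt (\<Sum>s\<in>S. (vnorm (F s))\<^sup>2)"

definition d_repr :: "'x set \<Rightarrow> 'x representation \<Rightarrow> 'x representation \<Rightarrow> real" where
  "d_repr S R1 R2 = max
     (INF A \<in> {A \<in> carrier_mat (repr_dim R2) (repr_dim R1). op_norm A \<le> 1}.
        fnorm S (\<lambda>s. A *\<^sub>v concat_H R1 s - concat_H R2 s))
     (INF B \<in> {B \<in> carrier_mat (repr_dim R1) (repr_dim R2). op_norm B \<le> 1}.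
        fnorm S (\<lambda>s. concat_H R1 s - B *\<^sub>v concat_H R2 s))"

end

theory Submission imports Defs "HOL-Analysis.L2_Norm" begin

lemma vnorm_L2: "vnorm v = L2_set (\<lambda>i. v $ i) {..<dim_vec v}"
  unfolding vnorm_def L2_set_def by simp

lemma vnorm_nonneg: "0 \<le> vnorm v" by (simp add: vnorm_def sum_nonneg)

lemma vnorm_comp_le: "j < dim_vec v \<Longrightarrow> \<bar>v $ j\<bar> \<le> vnorm v"
  unfolding vnorm_L2 using member_le_L2_set[of "{..<dim_vec v}" j "\<lambda>i. \<bar>v $ i\<bar>"]
  by (simp add: L2_set_def)

lemma vnorm_le_sum_abs: "vnorm v \<le> (\<Sum>i<dim_vec v. \<bar>v $ i\<bar>)"
  unfolding vnorm_L2 by (rule L2_set_le_sum_abs)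

lemma vnorm_add: "v \<in> carrier_vec n \<Longrightarrow> w \<in> carrier_vec n \<Longrightarrow> vnorm (v + w) \<le> vnorm v + vnorm w"
  unfolding vnorm_L2 using L2_set_triangle_ineq[of "\<lambda>i. v $ i" "\<lambda>i. w $ i" "{..<n}"]
  by (simp add: L2_set_def)

lemma vnorm_uminus: "vnorm (- v) = vnorm v"
  unfolding vnorm_def by simp

lemma vnorm_smult: "vnorm (k \<cdot>\<^sub>v v) = \<bar>k\<bar> * vnorm v"
proof -
  have "vnorm (k \<cdot>\<^sub>v v) = sqrt (k^2 * (\<Sum>i<dim_vec v. (v $ i)\<^sup>2))"
    unfolding vnorm_def by (simp add: power_mult_distrib sum_distrib_left)
  thus ?thesis by (simp add: vnorm_def real_sqrt_mult)
qed

lemma vnorm_zero_iff: "vnorm v = 0 \<longleftrightarrow> v = 0\<^sub>v (dim_vec v)"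
proof -
  have "vnorm v = 0 \<longleftrightarrow> (\<forall>i<dim_vec v. v $ i = 0)"
    unfolding vnorm_L2 by (subst L2_set_eq_0_iff) auto
  thus ?thesis by (auto simp: vec_eq_iff)
qed

lemma op_norm_bdd:
  assumes A: "A \<in> carrier_mat n m"
  shows "bdd_above ((\<lambda>v. vnorm (A *\<^sub>v v)) ` {v \<in> carrier_vec (dim_col A). vnorm v \<le> 1})"
proof (rule bdd_aboveI2)
  fix v assume v: "v \<in> {v \<in> carrier_vec (dim_col A). vnorm v \<le> 1}"
  have "vnorm (A *\<^sub>v v) \<le> (\<Sum>i<n. \<bar>(A *\<^sub>v v) $ i\<bar>)"
    using vnorm_le_sum_abs[of "A *\<^sub>v v"] A by simp
  also have "\<dots> \<le> (\<Sum>i<n. \<Sum>j<m. \<bar>A $$ (i,j)\<bar>)"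
  proof (rule sum_mono)
    fix i assume i: "i \<in> {..<n}"
    have "\<bar>(A *\<^sub>v v) $ i\<bar> = \<bar>\<Sum>j<m. A $$ (i,j) * v $ j\<bar>"
      using A v i by (auto simp: scalar_prod_def row_def lessThan_atLeast0)
    also have "\<dots> \<le> (\<Sum>j<m. \<bar>A $$ (i,j)\<bar> * \<bar>v $ j\<bar>)"
      by (rule order_trans[OF sum_abs]) (simp add: abs_mult)
    also have "\<dots> \<le> (\<Sum>j<m. \<bar>A $$ (i,j)\<bar>)"
    proof (rule sum_mono)
      fix j assume "j \<in> {..<m}"
      hence "\<bar>v $ j\<bar> \<le> 1" using vnorm_comp_le[of j v] v A by auto
      thus "\<bar>A $$ (i,j)\<bar> * \<bar>v $ j\<bar> \<le> \<bar>A $$ (i,j)\<bar>"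
        by (simp add: mult_left_le)
    qed
    finally show "\<bar>(A *\<^sub>v v) $ i\<bar> \<le> (\<Sum>j<m. \<bar>A $$ (i,j)\<bar>)" .
  qed
  finally show "vnorm (A *\<^sub>v v) \<le> (\<Sum>i<n. \<Sum>j<m. \<bar>A $$ (i,j)\<bar>)" .
qed

lemma op_norm_bound:
  assumes A: "A \<in> carrier_mat n m" and v: "v \<in> carrier_vec m"
  shows "vnorm (A *\<^sub>v v) \<le> op_norm A * vnorm v"
proof (cases "vnorm v = 0")
  case True
  hence "v = 0\<^sub>v m" using v vnorm_zero_iff by auto
  hence "A *\<^sub>v v = 0\<^sub>v n" using A by auto
  thus ?thesis using True by (simp add: vnorm_def)
next
  case False
  hence pos: "vnorm v > 0" using vnorm_nonneg[of v] by linarith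
  define u where "u = (1 / vnorm v) \<cdot>\<^sub>v v"
  have u: "u \<in> carrier_vec (dim_col A)" "vnorm u \<le> 1"
    using A v pos by (auto simp: u_def vnorm_smult)
  have "vnorm (A *\<^sub>v u) \<le> op_norm A"
    unfolding op_norm_def
    by (rule cSUP_upper[OF _ op_norm_bdd[OF A]]) (use u in auto)
  moreover have "A *\<^sub>v u = (1 / vnorm v) \<cdot>\<^sub>v (A *\<^sub>v v)"
    unfolding u_def using mult_mat_vec[OF A v] by simp
  ultimately have "vnorm (A *\<^sub>v v) / vnorm v \<le> op_norm A"
    using pos by (simp add: vnorm_smult)
  thus ?thesis using pos by (simp add: divide_le_eq mult.commute)
qed

lemma op_norm_contr:
  assumes A: "A \<in> carrier_mat n m" and v: "v \<in> carrier_vec m" and "op_norm A \<le> 1"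
  shows "vnorm (A *\<^sub>v v) \<le> vnorm v"
proof -
  have "op_norm A * vnorm v \<le> 1 * vnorm v"
    by (rule mult_right_mono[OF assms(3) vnorm_nonneg])
  thus ?thesis using op_norm_bound[OF A v] by simp
qed

lemma op_norm_mult:
  assumes A: "A \<in> carrier_mat n k" and B: "B \<in> carrier_mat k m"
    and "op_norm A \<le> 1" "op_norm B \<le> 1"
  shows "op_norm (A * B) \<le> 1"
  unfolding op_norm_def
proof (rule cSUP_least)
  show "{v \<in> carrier_vec (dim_col (A * B)). vnorm v \<le> 1} \<noteq> {}"
    by (rule ex_in_conv[THEN iffD1], rule exI[of _ "0\<^sub>v (dim_col (A*B))"]) (simp add: vnorm_def)
  fix v assume v: "v \<in> {v \<in> carrier_vec (dim_col (A * B)). vnorm v \<le> 1}"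
  hence vc: "v \<in> carrier_vec m" using B by auto
  have "vnorm ((A * B) *\<^sub>v v) = vnorm (A *\<^sub>v (B *\<^sub>v v))" using A B vc by simp
  also have "\<dots> \<le> vnorm (B *\<^sub>v v)" using op_norm_contr[OF A _ assms(3)] B vc by simp
  also have "\<dots> \<le> vnorm v" using op_norm_contr[OF B vc assms(4)] .
  finally show "vnorm ((A * B) *\<^sub>v v) \<le> 1" using v by simp
qed

lemma op_norm_one: "op_norm (1\<^sub>m n) \<le> 1"
  unfolding op_norm_def
proof (rule cSUP_least)
  show "{v \<in> carrier_vec (dim_col (1\<^sub>m n)). vnorm v \<le> 1} \<noteq> {}"
    by (rule ex_in_conv[THEN iffD1], rule exI[of _ "0\<^sub>v n"]) (simp add: vnorm_def)
qed auto


lemma foldr_carrier: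
  "length ds = length hs \<Longrightarrow> (\<forall>l<length hs. (hs!l) s \<in> carrier_vec (ds!l)) \<Longrightarrow>
   foldr (\<lambda>h acc. h s @\<^sub>v acc) hs (vec 0 f) \<in> carrier_vec (sum_list ds)"
proof (induction hs arbitrary: ds)
  case Nil thus ?case by simp
next
  case (Cons h hs)
  then obtain d ds' where ds: "ds = d # ds'" by (cases ds) auto
  have "h s \<in> carrier_vec d" using Cons.prems ds by force
  moreover have "foldr (\<lambda>h acc. h s @\<^sub>v acc) hs (vec 0 f) \<in> carrier_vec (sum_list ds')"
    using Cons.prems ds by (intro Cons.IH) auto
  ultimately show ?case using ds by simp
qed

lemma concat_H_carrier:
  assumes "wf_repr S R" "s \<in> S"
  shows "concat_H R s \<in> carrier_vec (repr_dim R)"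
  unfolding concat_H_def repr_dim_def
  by (rule foldr_carrier) (use assms in \<open>auto simp: wf_repr_def\<close>)

lemma fnorm_L2: "fnorm S F = L2_set (\<lambda>s. vnorm (F s)) S"
  unfolding fnorm_def L2_set_def by simp

lemma fnorm_nonneg: "0 \<le> fnorm S F"
  unfolding fnorm_L2 by simp

lemma fnorm_cong: "(\<And>s. s \<in> S \<Longrightarrow> F s = G s) \<Longrightarrow> fnorm S F = fnorm S G"
  unfolding fnorm_def by simp

lemma fnorm_mono: "(\<And>s. s \<in> S \<Longrightarrow> vnorm (F s) \<le> vnorm (G s)) \<Longrightarrow> fnorm S F \<le> fnorm S G"
  unfolding fnorm_L2 by (rule L2_set_mono) (auto simp: vnorm_nonneg)

lemma fnorm_triangle:
  assumes "\<And>s. s \<in> S \<Longrightarrow> F s \<in> carrier_vec n \<and> G s \<in> carrier_vec n"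
  shows "fnorm S (\<lambda>s. F s + G s) \<le> fnorm S F + fnorm S G"
proof -
  have "fnorm S (\<lambda>s. F s + G s) \<le> L2_set (\<lambda>s. vnorm (F s) + vnorm (G s)) S"
    unfolding fnorm_L2 using assms
    by (intro L2_set_mono) (auto simp: vnorm_nonneg intro: vnorm_add)
  also have "\<dots> \<le> fnorm S F + fnorm S G"
    unfolding fnorm_L2 by (rule L2_set_triangle_ineq)
  finally show ?thesis .
qed

definition dA :: "'x set \<Rightarrow> ('x \<Rightarrow> real vec) \<Rightarrow> ('x \<Rightarrow> real vec) \<Rightarrow> nat \<Rightarrow> nat \<Rightarrow> real" where
  "dA S H1 H2 n1 n2 = (INF A \<in> {A \<in> carrier_mat n2 n1. op_norm A \<le> 1}.
        fnorm S (\<lambda>s. A *\<^sub>v H1 s - H2 s))"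

lemma op_norm_zero: "op_norm (0\<^sub>m n m :: real mat) \<le> 1"
  unfolding op_norm_def
proof (rule cSUP_least)
  show "{v \<in> carrier_vec (dim_col (0\<^sub>m n m :: real mat)). vnorm v \<le> 1} \<noteq> {}"
    by (rule ex_in_conv[THEN iffD1], rule exI[of _ "0\<^sub>v m"]) (simp add: vnorm_def)
next
  fix v assume "v \<in> {v \<in> carrier_vec (dim_col (0\<^sub>m n m :: real mat)). vnorm v \<le> 1}"
  hence "(0\<^sub>m n m :: real mat) *\<^sub>v v = 0\<^sub>v n" by auto
  thus "vnorm ((0\<^sub>m n m :: real mat) *\<^sub>v v) \<le> 1" by (simp add: vnorm_def)
qed

lemma ne_set: "{A \<in> carrier_mat n m. op_norm A \<le> (1::real)} \<noteq> {}"
proof -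
  have "0\<^sub>m n m \<in> {A \<in> carrier_mat n m. op_norm A \<le> (1::real)}"
    using op_norm_zero by simp
  thus ?thesis by blast
qed

lemma inf_add_le:
  fixes f g :: "'a \<Rightarrow> real"
  assumes "X \<noteq> {}" "Y \<noteq> {}" "\<And>x. x \<in> X \<Longrightarrow> 0 \<le> f x" "\<And>y. y \<in> Y \<Longrightarrow> 0 \<le> g y"
    and "\<And>x y. x \<in> X \<Longrightarrow> y \<in> Y \<Longrightarrow> a \<le> f x + g y"
  shows "a \<le> (INF x\<in>X. f x) + (INF y\<in>Y. g y)"
proof -
  have "\<And>y. y \<in> Y \<Longrightarrow> a - g y \<le> (INF x\<in>X. f x)"
    using assms by (intro cINF_greatest) (auto simp: algebra_simps)
  hence "\<And>y. y \<in> Y \<Longrightarrow> a - (INF x\<in>X. f x) \<le> g y" by (auto simp: algebra_simps)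
  hence "a - (INF x\<in>X. f x) \<le> (INF y\<in>Y. g y)"
    using assms by (intro cINF_greatest) auto
  thus ?thesis by simp
qed

lemma dA_zero:
  assumes "\<And>s. s \<in> S \<Longrightarrow> H s \<in> carrier_vec n"
  shows "dA S H H n n = 0"
proof -
  have mem: "1\<^sub>m n \<in> {A \<in> carrier_mat n n. op_norm A \<le> 1}" using op_norm_one by auto
  have eq: "fnorm S (\<lambda>s. 1\<^sub>m n *\<^sub>v H s - H s) = fnorm S (\<lambda>s. 0\<^sub>v n)"
  proof (rule fnorm_cong)
    fix s assume s: "s \<in> S"
    have "1\<^sub>m n *\<^sub>v H s = H s" using assms[OF s] by simp
    thus "1\<^sub>m n *\<^sub>v H s - H s = 0\<^sub>v n" using assms[OF s] by simp
  qed
  have "fnorm S (\<lambda>s. 0\<^sub>v n) = 0" by (simp add: fnorm_def vnorm_def)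
  have "dA S H H n n \<le> fnorm S (\<lambda>s. 1\<^sub>m n *\<^sub>v H s - H s)" unfolding dA_def
    by (rule cINF_lower[OF _ mem]) (rule bdd_belowI2, rule fnorm_nonneg)
  hence "dA S H H n n \<le> 0" using eq \<open>fnorm S (\<lambda>s. 0\<^sub>v n) = 0\<close> by simp
  moreover have "0 \<le> dA S H H n n" unfolding dA_def
    by (rule cINF_greatest[OF ne_set fnorm_nonneg])
  ultimately show ?thesis by simp
qed

lemma vec_split:
  fixes a b z :: "real vec"
  assumes "a \<in> carrier_vec n" "b \<in> carrier_vec n" "z \<in> carrier_vec n"
  shows "a - z = (a - b) + (b - z)"
proof (rule eq_vecI)
  show "dim_vec (a - z) = dim_vec (a - b + (b - z))" using assms by simp
  fix i assume "i < dim_vec (a - b + (b - z))"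
  hence i: "i < n" using assms by simp
  show "(a - z) $ i = (a - b + (b - z)) $ i" using assms i by simp
qed

lemma dA_tri:
  assumes H1: "\<And>s. s \<in> S \<Longrightarrow> H1 s \<in> carrier_vec n1"
    and H2: "\<And>s. s \<in> S \<Longrightarrow> H2 s \<in> carrier_vec n2"
    and H3: "\<And>s. s \<in> S \<Longrightarrow> H3 s \<in> carrier_vec n3"
  shows "dA S H1 H3 n1 n3 \<le> dA S H1 H2 n1 n2 + dA S H2 H3 n2 n3"
  unfolding dA_def
proof (rule inf_add_le[OF ne_set ne_set fnorm_nonneg fnorm_nonneg])
  fix A1 A2
  assume A1: "A1 \<in> {A \<in> carrier_mat n2 n1. op_norm A \<le> 1}"
    and A2: "A2 \<in> {A \<in> carrier_mat n3 n2. op_norm A \<le> 1}"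
  have mem: "A2 * A1 \<in> {A \<in> carrier_mat n3 n1. op_norm A \<le> 1}"
    using A1 A2 op_norm_mult[of A2 n3 n2 A1 n1] by auto
  have "(INF A \<in> {A \<in> carrier_mat n3 n1. op_norm A \<le> 1}. fnorm S (\<lambda>s. A *\<^sub>v H1 s - H3 s))
      \<le> fnorm S (\<lambda>s. (A2 * A1) *\<^sub>v H1 s - H3 s)"
    by (rule cINF_lower[OF _ mem]) (auto intro: bdd_belowI2 fnorm_nonneg)
  also have "\<dots> = fnorm S (\<lambda>s. A2 *\<^sub>v (A1 *\<^sub>v H1 s - H2 s) + (A2 *\<^sub>v H2 s - H3 s))"
  proof (rule fnorm_cong)
    fix s assume s: "s \<in> S"
    have c: "A1 \<in> carrier_mat n2 n1" "A2 \<in> carrier_mat n3 n2" using A1 A2 by auto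
    have eq: "A2 *\<^sub>v (A1 *\<^sub>v H1 s - H2 s) = A2 *\<^sub>v (A1 *\<^sub>v H1 s) - A2 *\<^sub>v H2 s"
      by (rule mult_minus_distrib_mat_vec[OF c(2) mult_mat_vec_carrier[OF c(1) H1[OF s]] H2[OF s]])
    have as: "(A2 * A1) *\<^sub>v H1 s = A2 *\<^sub>v (A1 *\<^sub>v H1 s)"
      by (rule assoc_mult_mat_vec[OF c(2) c(1) H1[OF s]])
    have c1: "A2 *\<^sub>v (A1 *\<^sub>v H1 s) \<in> carrier_vec n3" "A2 *\<^sub>v H2 s \<in> carrier_vec n3"
      by (rule mult_mat_vec_carrier[OF c(2) mult_mat_vec_carrier[OF c(1) H1[OF s]]],
          rule mult_mat_vec_carrier[OF c(2) H2[OF s]])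
    have "(A2 * A1) *\<^sub>v H1 s - H3 s = A2 *\<^sub>v (A1 *\<^sub>v H1 s) - H3 s" by (simp only: as)
    also have "\<dots> = (A2 *\<^sub>v (A1 *\<^sub>v H1 s) - A2 *\<^sub>v H2 s) + (A2 *\<^sub>v H2 s - H3 s)"
      by (rule vec_split[OF c1(1) c1(2) H3[OF s]])
    also have "\<dots> = A2 *\<^sub>v (A1 *\<^sub>v H1 s - H2 s) + (A2 *\<^sub>v H2 s - H3 s)"
      by (simp only: eq)
    finally show "(A2 * A1) *\<^sub>v H1 s - H3 s = A2 *\<^sub>v (A1 *\<^sub>v H1 s - H2 s) + (A2 *\<^sub>v H2 s - H3 s)" .
  qed
  finally have t1: "(INF A \<in> {A \<in> carrier_mat n3 n1. op_norm A \<le> 1}. fnorm S (\<lambda>s. A *\<^sub>v H1 s - H3 s))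
      \<le> fnorm S (\<lambda>s. A2 *\<^sub>v (A1 *\<^sub>v H1 s - H2 s) + (A2 *\<^sub>v H2 s - H3 s))" .
  have t2: "fnorm S (\<lambda>s. A2 *\<^sub>v (A1 *\<^sub>v H1 s - H2 s) + (A2 *\<^sub>v H2 s - H3 s))
     \<le> fnorm S (\<lambda>s. A2 *\<^sub>v (A1 *\<^sub>v H1 s - H2 s)) + fnorm S (\<lambda>s. A2 *\<^sub>v H2 s - H3 s)"
  proof (rule fnorm_triangle[where n = n3])
    fix s assume s: "s \<in> S"
    show "A2 *\<^sub>v (A1 *\<^sub>v H1 s - H2 s) \<in> carrier_vec n3 \<and> A2 *\<^sub>v H2 s - H3 s \<in> carrier_vec n3"
      using A1 A2 H1[OF s] H2[OF s] H3[OF s]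
      by (intro conjI minus_carrier_vec mult_mat_vec_carrier[of A2 n3 n2]) auto
  qed
  have t3: "fnorm S (\<lambda>s. A2 *\<^sub>v (A1 *\<^sub>v H1 s - H2 s)) \<le> fnorm S (\<lambda>s. A1 *\<^sub>v H1 s - H2 s)"
  proof (rule fnorm_mono)
    fix s assume s: "s \<in> S"
    have "A1 *\<^sub>v H1 s - H2 s \<in> carrier_vec n2" using A1 H1[OF s] H2[OF s] by (intro minus_carrier_vec mult_mat_vec_carrier[of A1 n2 n1]) auto
    moreover have "A2 \<in> carrier_mat n3 n2" "op_norm A2 \<le> 1" using A2 by auto
    ultimately show "vnorm (A2 *\<^sub>v (A1 *\<^sub>v H1 s - H2 s)) \<le> vnorm (A1 *\<^sub>v H1 s - H2 s)"
      by (intro op_norm_contr[where n = n3 and m = n2])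
  qed
  show "(INF A \<in> {A \<in> carrier_mat n3 n1. op_norm A \<le> 1}. fnorm S (\<lambda>s. A *\<^sub>v H1 s - H3 s))
      \<le> fnorm S (\<lambda>s. A1 *\<^sub>v H1 s - H2 s) + fnorm S (\<lambda>s. A2 *\<^sub>v H2 s - H3 s)"
    using t1 t2 t3 by linarith
qed

lemma vec_neg:
  fixes a b :: "real vec"
  assumes "a \<in> carrier_vec n" "b \<in> carrier_vec n"
  shows "a - b = - (b - a)"
proof (rule eq_vecI)
  show "dim_vec (a - b) = dim_vec (- (b - a))" using assms by simp
  fix i assume "i < dim_vec (- (b - a))"
  hence i: "i < n" using assms by simp
  show "(a - b) $ i = (- (b - a)) $ i" using assms i by simp
qed

lemma d_repr_dA:
  assumes "wf_repr S R1" "wf_repr S R2"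
  shows "d_repr S R1 R2 = max (dA S (concat_H R1) (concat_H R2) (repr_dim R1) (repr_dim R2))
                              (dA S (concat_H R2) (concat_H R1) (repr_dim R2) (repr_dim R1))"
proof -
  have eq: "fnorm S (\<lambda>s. concat_H R1 s - B *\<^sub>v concat_H R2 s) = fnorm S (\<lambda>s. B *\<^sub>v concat_H R2 s - concat_H R1 s)"
    if B: "B \<in> {B \<in> carrier_mat (repr_dim R1) (repr_dim R2). op_norm B \<le> 1}" for B
  proof -
    have "fnorm S (\<lambda>s. concat_H R1 s - B *\<^sub>v concat_H R2 s) = fnorm S (\<lambda>s. - (B *\<^sub>v concat_H R2 s - concat_H R1 s))"
    proof (rule fnorm_cong)
      fix s assume s: "s \<in> S"
      have Bc: "B \<in> carrier_mat (repr_dim R1) (repr_dim R2)" using B by simp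
      show "concat_H R1 s - B *\<^sub>v concat_H R2 s = - (B *\<^sub>v concat_H R2 s - concat_H R1 s)"
        by (rule vec_neg[OF concat_H_carrier[OF assms(1) s]
              mult_mat_vec_carrier[OF Bc concat_H_carrier[OF assms(2) s]]])
    qed
    thus ?thesis by (simp add: fnorm_def vnorm_uminus)
  qed
  have "(INF B \<in> {B \<in> carrier_mat (repr_dim R1) (repr_dim R2). op_norm B \<le> 1}.
           fnorm S (\<lambda>s. concat_H R1 s - B *\<^sub>v concat_H R2 s))
      = (INF B \<in> {B \<in> carrier_mat (repr_dim R1) (repr_dim R2). op_norm B \<le> 1}.
           fnorm S (\<lambda>s. B *\<^sub>v concat_H R2 s - concat_H R1 s))"
    by (rule INF_cong[OF refl eq])
  thus ?thesis unfolding d_repr_def dA_def by simp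
qed

theorem lemmaG2:
  fixes S :: "'x set" and R1 R2 R3 :: "'x representation"
  assumes "finite S"
    and "wf_repr S R1" and "wf_repr S R2" and "wf_repr S R3"
  shows "d_repr S R1 R1 = 0 \<and> d_repr S R1 R2 = d_repr S R2 R1 \<and>
         d_repr S R1 R3 \<le> d_repr S R1 R2 + d_repr S R2 R3"
proof -
  note c1 = concat_H_carrier[OF assms(2)] and c2 = concat_H_carrier[OF assms(3)]
    and c3 = concat_H_carrier[OF assms(4)]
  define a12 where "a12 = dA S (concat_H R1) (concat_H R2) (repr_dim R1) (repr_dim R2)"
  define a21 where "a21 = dA S (concat_H R2) (concat_H R1) (repr_dim R2) (repr_dim R1)"
  define a13 where "a13 = dA S (concat_H R1) (concat_H R3) (repr_dim R1) (repr_dim R3)"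
  define a31 where "a31 = dA S (concat_H R3) (concat_H R1) (repr_dim R3) (repr_dim R1)"
  define a23 where "a23 = dA S (concat_H R2) (concat_H R3) (repr_dim R2) (repr_dim R3)"
  define a32 where "a32 = dA S (concat_H R3) (concat_H R2) (repr_dim R3) (repr_dim R2)"
  have t1: "a13 \<le> a12 + a23" unfolding a13_def a12_def a23_def
    by (rule dA_tri[OF c1 c2 c3])
  have t2: "a31 \<le> a32 + a21" unfolding a31_def a32_def a21_def
    by (rule dA_tri[OF c3 c2 c1])
  have z: "dA S (concat_H R1) (concat_H R1) (repr_dim R1) (repr_dim R1) = 0"
    by (rule dA_zero[OF c1])
  have e11: "d_repr S R1 R1 = 0" using d_repr_dA[OF assms(2) assms(2)] z by simp
  have e12: "d_repr S R1 R2 = max a12 a21" unfolding a12_def a21_def by (rule d_repr_dA[OF assms(2) assms(3)])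
  have e21: "d_repr S R2 R1 = max a21 a12" unfolding a12_def a21_def by (rule d_repr_dA[OF assms(3) assms(2)])
  have e13: "d_repr S R1 R3 = max a13 a31" unfolding a13_def a31_def by (rule d_repr_dA[OF assms(2) assms(4)])
  have e23: "d_repr S R2 R3 = max a23 a32" unfolding a23_def a32_def by (rule d_repr_dA[OF assms(3) assms(4)])
  have "max a13 a31 \<le> max a12 a21 + max a23 a32"
    using t1 t2 by (simp add: max_def)
  thus ?thesis using e11 e12 e21 e13 e23 by (simp add: max.commute)
qed

end
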